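(* Let $\mathbf A$ be a WHB-algebra. Then $T(\mathbf A)=(\mathcal B(\mathbf A),\cup,\cap,{}^c,G_{\mathbf A},H_{\mathbf A},\emptyset,X(\mathbf A))$ is a tense algebra.
   Context: A WHB-algebra is an algebra $(A,\wedge,\vee,\to,\leftarrow,0,1)$ such that $(A,\wedge,\vee,0,1)$ is a bounded distributive lattice and for all $a,b,c\in A$: $a\to a=1$; $a\to(b\wedge c)=(a\to b)\wedge(a\to c)$; $(a\vee b)\to c=(a\to c)\wedge(b\to c)$; $(a\to b)\wedge(b\to c)\le a\to c$; $a\leftarrow a=0$; $(a\vee b)\leftarrow c=(a\leftarrow c)\vee(b\leftarrow c)$; $a\leftarrow(b\wedge c)=(a\leftarrow b)\vee(a\leftarrow c)$; $a\leftarrow c\le(a\leftarrow b)\vee(b\leftarrow c)$; $a\wedge((a\to b)\leftarrow 0)\le b$; $a\le b\vee(1\to(a\leftarrow b))$. $X(\mathbf A)$ is the set of prime filters of $\mathbf A$, $\sigma_{\mathbf A}(a)=\{P\colon a\in P\}$, $\tau_{\mathbf A}$ the topology on $X(\mathbf A)$ with subbase $\{\sigma_{\mathbf A}(a)\}\cup\{X(\mathbf A)\setminus\sigma_{\mathbf A}(a)\}$, and $\mathcal B(\mathbf A)$ the set of $\tau_{\mathbf A}$-clopen subsets (equivalently, finite unions of sets $\sigma_{\mathbf A}(a)\setminus\sigma_{\mathbf A}(b)$). $(P,Q)\in R_{\mathbf A}$ iff for all $a,b$ ($a\to b\in P$, $a\in Q$ imply $b\in Q$); $(P,Q)\in S_{\mathbf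 A}$ iff for all $a,b$ ($a\in Q$, $b\notin Q$ imply $a\leftarrow b\in P$). $G_{\mathbf A}(U)=\{P\colon R_{\mathbf A}(P)\subseteq U\}$ and $H_{\mathbf A}(U)=\{P\colon S_{\mathbf A}(P)\subseteq U\}$, where $\mathcal R(P)=\{Q\colon(P,Q)\in\mathcal R\}$. A tense algebra is $(\mathbf B,G,H)$ with $\mathbf B$ a Boolean algebra and unary operations $G,H$ such that, with $P(x)=\neg H(\neg x)$ and $F(x)=\neg G(\neg x)$: $P(x)\le y\iff x\le G(y)$ and $F(x)\le y\iff x\le H(y)$ for all $x,y$. *)

theory Defs
  imports "HOL-Analysis.Analysis"
begin

definition WHB :: "('a::{distrib_lattice,bounded_lattice} \<Rightarrow> 'a \<Rightarrow> 'a) \<Rightarrow> ('a \<Rightarrow> 'a \<Rightarrow> 'a) \<Rightarrow> bool" where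
  "WHB imp coimp \<longleftrightarrow>
     (\<forall>a. imp a a = top) \<and>
     (\<forall>a b c. imp a (inf b c) = inf (imp a b) (imp a c)) \<and>
     (\<forall>a b c. imp (sup a b) c = inf (imp a c) (imp b c)) \<and>
     (\<forall>a b c. inf (imp a b) (imp b c) \<le> imp a c) \<and>
     (\<forall>a. coimp a a = bot) \<and>
     (\<forall>a b c. coimp (sup a b) c = sup (coimp a c) (coimp b c)) \<and>
     (\<forall>a b c. coimp a (inf b c) = sup (coimp a b) (coimp a c)) \<and>
     (\<forall>a b c. coimp a c \<le> sup (coimp a b) (coimp b c)) \<and>
     (\<forall>a b. inf a (coimp (imp a b) bot) \<le> b) \<and>
     (\<forall>a b. a \<le> sup b (imp top (coimp a b)))"

definition prime_filter :: "'a::{distrib_lattice,bounded_lattice} set \<Rightarrow> bool" where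
  "prime_filter P \<longleftrightarrow>
     top \<in> P \<and> bot \<notin> P \<and>
     (\<forall>a b. a \<in> P \<longrightarrow> a \<le> b \<longrightarrow> b \<in> P) \<and>
     (\<forall>a b. a \<in> P \<longrightarrow> b \<in> P \<longrightarrow> inf a b \<in> P) \<and>
     (\<forall>a b. sup a b \<in> P \<longrightarrow> a \<in> P \<or> b \<in> P)"

definition Xspec :: "'a::{distrib_lattice,bounded_lattice} set set" where
  "Xspec = {P. prime_filter P}"

definition sigmaA :: "'a::{distrib_lattice,bounded_lattice} \<Rightarrow> 'a set set" where
  "sigmaA a = {P \<in> Xspec. a \<in> P}"

definition tauA :: "'a::{distrib_lattice,bounded_lattice} set topology" where
  "tauA = topology_generated_by (range sigmaA \<union> range (\<lambda>a. Xspec - sigmaA a))"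

definition BA :: "'a::{distrib_lattice,bounded_lattice} set set set" where
  "BA = {U. openin tauA U \<and> closedin tauA U}"

definition RA :: "('a::{distrib_lattice,bounded_lattice} \<Rightarrow> 'a \<Rightarrow> 'a) \<Rightarrow> ('a set \<times> 'a set) set" where
  "RA imp = {(P, Q). P \<in> Xspec \<and> Q \<in> Xspec \<and> (\<forall>a b. imp a b \<in> P \<longrightarrow> a \<in> Q \<longrightarrow> b \<in> Q)}"

definition SA :: "('a::{distrib_lattice,bounded_lattice} \<Rightarrow> 'a \<Rightarrow> 'a) \<Rightarrow> ('a set \<times> 'a set) set" where
  "SA coimp = {(P, Q). P \<in> Xspec \<and> Q \<in> Xspec \<and> (\<forall>a b. a \<in> Q \<longrightarrow> b \<notin> Q \<longrightarrow> coimp a b \<in> P)}"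

definition GA :: "('a::{distrib_lattice,bounded_lattice} \<Rightarrow> 'a \<Rightarrow> 'a) \<Rightarrow> 'a set set \<Rightarrow> 'a set set" where
  "GA imp U = {P \<in> Xspec. RA imp `` {P} \<subseteq> U}"

definition HA :: "('a::{distrib_lattice,bounded_lattice} \<Rightarrow> 'a \<Rightarrow> 'a) \<Rightarrow> 'a set set \<Rightarrow> 'a set set" where
  "HA coimp U = {P \<in> Xspec. SA coimp `` {P} \<subseteq> U}"

text \<open>A tense algebra whose Boolean reduct is the field of sets B \<subseteq> Pow X with operations
  union, intersection, complement relative to X, bottom {} and top X; G and H are unary
  operations on B, with P(x) = -H(-x), F(x) = -G(-x) and the two adjunctions.\<close>
definition tense_algebra_of_sets ::
  "'x set \<Rightarrow> 'x set set \<Rightarrow> ('x set \<Rightarrow> 'x set) \<Rightarrow> ('x set \<Rightarrow> 'x set) \<Rightarrow> bool" where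
  "tense_algebra_of_sets X B G H \<longleftrightarrow>
     B \<subseteq> Pow X \<and> {} \<in> B \<and> X \<in> B \<and>
     (\<forall>U\<in>B. \<forall>V\<in>B. U \<union> V \<in> B \<and> U \<inter> V \<in> B) \<and>
     (\<forall>U\<in>B. X - U \<in> B) \<and>
     (\<forall>U\<in>B. G U \<in> B \<and> H U \<in> B) \<and>
     (\<forall>x\<in>B. \<forall>y\<in>B. (X - H (X - x) \<subseteq> y \<longleftrightarrow> x \<subseteq> G y)) \<and>
     (\<forall>x\<in>B. \<forall>y\<in>B. (X - G (X - x) \<subseteq> y \<longleftrightarrow> x \<subseteq> H y))"

end

theory Submission
  imports Defs
begin


lemma prime_ext:
  fixes rel :: "'a::{distrib_lattice,bounded_lattice} \<Rightarrow> 'a \<Rightarrow> bool"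
  assumes le: "\<And>x y. x \<le> y \<Longrightarrow> rel x y"
    and tr: "\<And>x y z. rel x y \<Longrightarrow> rel y z \<Longrightarrow> rel x z"
    and ri: "\<And>x y z. rel x y \<Longrightarrow> rel x z \<Longrightarrow> rel x (inf y z)"
    and ls: "\<And>x y z. rel x z \<Longrightarrow> rel y z \<Longrightarrow> rel (sup x y) z"
    and Fi: "\<And>x y. x \<in> F \<Longrightarrow> y \<in> F \<Longrightarrow> inf x y \<in> F"
    and Fu: "\<And>x y. x \<in> F \<Longrightarrow> rel x y \<Longrightarrow> y \<in> F"
    and Is: "\<And>x y. x \<in> I \<Longrightarrow> y \<in> I \<Longrightarrow> sup x y \<in> I"
    and Id: "\<And>x y. y \<in> I \<Longrightarrow> rel x y \<Longrightarrow> x \<in> I"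
    and FI: "F \<inter> I = {}" and Ft: "top \<in> F" and Ib: "bot \<in> I"
  shows "\<exists>Q. prime_filter Q \<and> F \<subseteq> Q \<and> Q \<inter> I = {} \<and> (\<forall>x\<in>Q. \<forall>y. rel x y \<longrightarrow> y \<in> Q)"
proof -
  define \<A> where "\<A> = {Q. F \<subseteq> Q \<and> Q \<inter> I = {} \<and> (\<forall>x\<in>Q. \<forall>y\<in>Q. inf x y \<in> Q)
     \<and> (\<forall>x\<in>Q. \<forall>y. rel x y \<longrightarrow> y \<in> Q)}"
  have "F \<in> \<A>" using FI Fi Fu unfolding \<A>_def by blast
  then have ne: "\<A> \<noteq> {}" by blast
  have ch: "\<Union>\<C> \<in> \<A>" if "\<C> \<noteq> {}" "subset.chain \<A> \<C>" for \<C>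
  proof -
    have sub: "\<C> \<subseteq> \<A>" and lin: "\<forall>x\<in>\<C>. \<forall>y\<in>\<C>. x \<subseteq> y \<or> y \<subseteq> x"
      using that(2) by (auto simp: subset.chain_def)
    have "\<forall>x\<in>\<Union>\<C>. \<forall>y\<in>\<Union>\<C>. inf x y \<in> \<Union>\<C>"
    proof (intro ballI)
      fix x y assume "x \<in> \<Union>\<C>" "y \<in> \<Union>\<C>"
      then obtain X Y where XY: "X \<in> \<C>" "Y \<in> \<C>" "x \<in> X" "y \<in> Y" by blast
      show "inf x y \<in> \<Union>\<C>"
      proof (cases "X \<subseteq> Y")
        case True
        then have "inf x y \<in> Y" using XY sub unfolding \<A>_def by blast
        then show ?thesis using XY by blast
      next
        case False
        then have "Y \<subseteq> X" using lin XY by blast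
        then have "inf x y \<in> X" using XY sub unfolding \<A>_def by blast
        then show ?thesis using XY by blast
      qed
    qed
    then show ?thesis using sub that(1) unfolding \<A>_def by blast
  qed
  obtain M where M: "M \<in> \<A>" and max: "\<And>X. X \<in> \<A> \<Longrightarrow> M \<subseteq> X \<Longrightarrow> X = M"
    using subset_Zorn_nonempty[OF ne ch] by blast
  have MF: "F \<subseteq> M" and MI: "M \<inter> I = {}" and Mi: "\<And>x y. x \<in> M \<Longrightarrow> y \<in> M \<Longrightarrow> inf x y \<in> M"
    and Mu: "\<And>x y. x \<in> M \<Longrightarrow> rel x y \<Longrightarrow> y \<in> M" using M unfolding \<A>_def by blast+
  have Mt: "top \<in> M" using MF Ft by blast
  have refl: "rel x x" for x by (rule le) simp
  have prime: "x \<in> M \<or> y \<in> M" if xy: "sup x y \<in> M" for x y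
  proof (rule ccontr)
    assume nxy: "\<not> (x \<in> M \<or> y \<in> M)"
    have ext: "\<exists>q\<in>M. inf q z \<in> I" if zM: "z \<notin> M" for z
    proof (rule ccontr)
      assume nq: "\<not> (\<exists>q\<in>M. inf q z \<in> I)"
      define Mz where "Mz = {w. \<exists>q\<in>M. rel (inf q z) w}"
      have "Mz \<in> \<A>"
      proof -
        have "M \<subseteq> Mz" unfolding Mz_def using le by (metis (mono_tags, lifting) inf_le1 mem_Collect_eq subsetI)
        moreover have "Mz \<inter> I = {}"
        proof (rule ccontr)
          assume "Mz \<inter> I \<noteq> {}"
          then obtain w q where "q \<in> M" "rel (inf q z) w" "w \<in> I" unfolding Mz_def by blast
          then show False using nq Id by blast
        qed
        moreover have "\<forall>a\<in>Mz. \<forall>b\<in>Mz. inf a b \<in> Mz"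
        proof (intro ballI)
          fix a b assume "a \<in> Mz" "b \<in> Mz"
          then obtain q1 q2 where q: "q1 \<in> M" "q2 \<in> M" "rel (inf q1 z) a" "rel (inf q2 z) b"
            unfolding Mz_def by blast
          have "rel (inf (inf q1 q2) z) (inf q1 z)" by (rule le) (meson inf_le1 inf_mono order_refl)
          moreover have "rel (inf (inf q1 q2) z) (inf q2 z)" by (rule le) (meson inf_le2 inf_mono order_refl)
          ultimately have "rel (inf (inf q1 q2) z) (inf a b)" using q tr ri by blast
          then show "inf a b \<in> Mz" unfolding Mz_def using q Mi by blast
        qed
        moreover have "\<forall>a\<in>Mz. \<forall>b. rel a b \<longrightarrow> b \<in> Mz" unfolding Mz_def using tr by blast
        ultimately show ?thesis using MF unfolding \<A>_def by blast
      qed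
      moreover have "M \<subseteq> Mz" unfolding Mz_def using le by (metis (mono_tags, lifting) inf_le1 mem_Collect_eq subsetI)
      ultimately have "Mz = M" using max by blast
      moreover have "z \<in> Mz" unfolding Mz_def using Mt refl[of z] by (metis (mono_tags, lifting) inf_top_left mem_Collect_eq)
      ultimately show False using zM by blast
    qed
    obtain q1 where q1: "q1 \<in> M" "inf q1 x \<in> I" using ext nxy by blast
    obtain q2 where q2: "q2 \<in> M" "inf q2 y \<in> I" using ext nxy by blast
    define q where "q = inf q1 q2"
    have qM: "q \<in> M" using q1 q2 Mi q_def by blast
    have "inf q x \<in> I" using Id[OF q1(2)] le unfolding q_def by (meson inf_le1 inf_mono order_refl)
    moreover have "inf q y \<in> I" using Id[OF q2(2)] le unfolding q_def by (meson inf_le2 inf_mono order_refl)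
    ultimately have "sup (inf q x) (inf q y) \<in> I" by (rule Is)
    moreover have "sup (inf q x) (inf q y) = inf q (sup x y)" by (simp add: inf_sup_distrib1)
    ultimately have i1: "inf q (sup x y) \<in> I" by simp
    have i2: "inf q (sup x y) \<in> M" using Mi qM xy by blast
    show False using MI i1 i2 by (simp add: disjoint_iff)
  qed
  have "bot \<notin> M" using MI Ib by (auto simp add: disjoint_iff)
  moreover have "\<forall>a b. a \<in> M \<longrightarrow> a \<le> b \<longrightarrow> b \<in> M" using Mu le by metis
  ultimately have "prime_filter M"
    unfolding prime_filter_def using Mt Mi prime by simp
  then show ?thesis using MF MI Mu by metis
qed


lemma pf_top: "prime_filter P \<Longrightarrow> top \<in> P" unfolding prime_filter_def by blast
lemma pf_bot: "prime_filter P \<Longrightarrow> bot \<notin> P" unfolding prime_filter_def by blast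
lemma pf_up: "prime_filter P \<Longrightarrow> a \<in> P \<Longrightarrow> a \<le> b \<Longrightarrow> b \<in> P" unfolding prime_filter_def by blast
lemma pf_inf: "prime_filter P \<Longrightarrow> inf a b \<in> P \<longleftrightarrow> a \<in> P \<and> b \<in> P"
  unfolding prime_filter_def by (meson inf_le1 inf_le2)
lemma pf_sup: "prime_filter P \<Longrightarrow> sup a b \<in> P \<longleftrightarrow> a \<in> P \<or> b \<in> P"
  unfolding prime_filter_def by (meson sup_ge1 sup_ge2)
lemma Xspec_iff: "P \<in> Xspec \<longleftrightarrow> prime_filter P" unfolding Xspec_def by simp

definition SB :: "'a::{distrib_lattice,bounded_lattice} set set set" where
  "SB = range sigmaA \<union> range (\<lambda>a. Xspec - sigmaA a)"

lemma tauA_SB: "tauA = topology_generated_by SB" unfolding tauA_def SB_def by simp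

lemma sigma_top: "sigmaA top = Xspec" unfolding sigmaA_def using pf_top Xspec_iff by blast

lemma UnSB: "\<Union>SB = (Xspec :: 'a::{distrib_lattice,bounded_lattice} set set)"
proof
  show "\<Union>SB \<subseteq> (Xspec :: 'a set set)" unfolding SB_def sigmaA_def by auto
  have "sigmaA (top::'a) \<in> SB" unfolding SB_def by blast
  then show "(Xspec :: 'a set set) \<subseteq> \<Union>SB" using sigma_top by blast
qed

lemma topspace_tauA: "topspace tauA = (Xspec :: 'a::{distrib_lattice,bounded_lattice} set set)"
  unfolding tauA_SB by (simp add: UnSB)

definition Bx :: "'a::{distrib_lattice,bounded_lattice} \<Rightarrow> 'a \<Rightarrow> 'a set set" where
  "Bx m j = {Q \<in> Xspec. m \<in> Q \<and> j \<notin> Q}"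

lemma open_sigma: "openin tauA (sigmaA a)"
  unfolding tauA_SB by (rule topology_generated_by_Basis) (simp add: SB_def)
lemma open_csigma: "openin tauA (Xspec - sigmaA a)"
  unfolding tauA_SB by (rule topology_generated_by_Basis) (simp add: SB_def)

lemma open_Bx: "openin tauA (Bx m j)"
proof -
  have "Bx m j = sigmaA m \<inter> (Xspec - sigmaA j)" unfolding Bx_def sigmaA_def by auto
  then show ?thesis using open_sigma open_csigma openin_Int by metis
qed

lemma Bx_Int: "Bx m1 j1 \<inter> Bx m2 j2 = Bx (inf m1 m2) (sup j1 j2)"
  unfolding Bx_def using pf_inf pf_sup Xspec_iff by blast

lemma open_basic:
  assumes "openin tauA V" "P \<in> V"
  shows "\<exists>m j. P \<in> Bx m j \<and> Bx m j \<subseteq> V"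
proof -
  have "generate_topology_on SB V" using assms(1) unfolding tauA_SB
    by (rule openin_topology_generated_by)
  then show ?thesis using assms(2)
  proof (induction arbitrary: P)
    case Empty
    then show ?case by simp
  next
    case (Int a b)
    then obtain m1 j1 m2 j2 where "P \<in> Bx m1 j1" "Bx m1 j1 \<subseteq> a" "P \<in> Bx m2 j2" "Bx m2 j2 \<subseteq> b"
      by blast
    then show ?case using Bx_Int by (metis IntI Int_mono)
  next
    case (UN K)
    then obtain k where "k \<in> K" "P \<in> k" by blast
    then show ?case using UN.IH by blast
  next
    case (Basis s)
    then obtain a where "s = sigmaA a \<or> s = Xspec - sigmaA a" unfolding SB_def by blast
    then show ?case
    proof
      assume s: "s = sigmaA a"
      have "Bx a bot = sigmaA a" unfolding Bx_def sigmaA_def using pf_bot Xspec_iff by blast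
      then show ?thesis using s Basis by blast
    next
      assume s: "s = Xspec - sigmaA a"
      have "Bx top a = Xspec - sigmaA a" unfolding Bx_def sigmaA_def using pf_top Xspec_iff by blast
      then show ?thesis using s Basis by blast
    qed
  qed
qed

lemma tau_eq: "(tauA :: 'a::{distrib_lattice,bounded_lattice} set topology) = topology (arbitrary union_of (finite intersection_of (\<lambda>x. x \<in> SB) relative_to \<Union>SB))"
proof -
  have "finite' intersection_of (\<lambda>x. x \<in> (SB :: 'a set set set)) = (finite intersection_of (\<lambda>x. x \<in> SB) relative_to \<Union>SB)"
  proof (intro ext iffI)
    fix T
    assume "(finite' intersection_of (\<lambda>x. x \<in> SB)) T"
    then obtain U where U: "finite U" "U \<noteq> {}" "U \<subseteq> SB" "\<Inter>U = T" unfolding intersection_of_def by blast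
    then have "T \<subseteq> \<Union>SB" by blast
    then show "(finite intersection_of (\<lambda>x. x \<in> SB) relative_to \<Union>SB) T"
      unfolding relative_to_def intersection_of_def using U by blast
  next
    fix T
    assume "(finite intersection_of (\<lambda>x. x \<in> SB) relative_to \<Union>SB) T"
    then obtain U where U: "finite U" "U \<subseteq> SB" "\<Union>SB \<inter> \<Inter>U = T" unfolding intersection_of_def relative_to_def by blast
    show "(finite' intersection_of (\<lambda>x. x \<in> SB)) T"
    proof (cases "U = {}")
      case True
      then have "T = \<Union>SB" using U by simp
      also have "\<Union>SB = sigmaA top" by (simp add: UnSB sigma_top)
      finally have "T = sigmaA top" .
      moreover have "sigmaA top \<in> SB" unfolding SB_def by blast
      ultimately show ?thesis unfolding intersection_of_def
        by (intro exI[of _ "{sigmaA top}"]) auto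
    next
      case False
      then have "T = \<Inter>U" using U by blast
      then show ?thesis unfolding intersection_of_def using U False by blast
    qed
  qed
  then show ?thesis unfolding tauA_SB generate_topology_on_eq by simp
qed



lemma compact_tauA: "compact_space (tauA :: 'a::{distrib_lattice,bounded_lattice} set topology)"
proof (rule Alexander_subbase[where \<B>=SB])
  show "topology (arbitrary union_of (finite intersection_of (\<lambda>x. x \<in> SB) relative_to \<Union>SB)) = (tauA :: 'a set topology)"
    by (rule tau_eq[symmetric])
  fix C :: "'a set set set"
  assume C: "C \<subseteq> SB" "\<Union>C = topspace tauA"
  have ts: "topspace (tauA :: 'a set topology) = Xspec" by (rule topspace_tauA)
  show "\<exists>C'. finite C' \<and> C' \<subseteq> C \<and> \<Union>C' = topspace tauA"
  proof (rule ccontr)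
    assume nf: "\<not> (\<exists>C'. finite C' \<and> C' \<subseteq> C \<and> \<Union>C' = topspace tauA)"
    define A where "A = {a. sigmaA a \<in> C}"
    define Bs where "Bs = {b. Xspec - sigmaA b \<in> C}"
    define F where "F = {x. \<exists>B0. finite B0 \<and> B0 \<subseteq> Bs \<and> (\<forall>Q\<in>Xspec. B0 \<subseteq> Q \<longrightarrow> x \<in> Q)}"
    define I where "I = {y. \<exists>A0. finite A0 \<and> A0 \<subseteq> A \<and> (\<forall>Q\<in>Xspec. y \<in> Q \<longrightarrow> (\<exists>a\<in>A0. a \<in> Q))}"
    have FI: "F \<inter> I = {}"
    proof (rule ccontr)
      assume "F \<inter> I \<noteq> {}"
      then obtain x where x: "x \<in> F" "x \<in> I" by blast
      have "\<exists>B0. finite B0 \<and> B0 \<subseteq> Bs \<and> (\<forall>Q\<in>Xspec. B0 \<subseteq> Q \<longrightarrow> x \<in> Q)"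
        using x(1) F_def by simp
      then obtain B0 where B0: "finite B0" "B0 \<subseteq> Bs" "\<forall>Q\<in>Xspec. B0 \<subseteq> Q \<longrightarrow> x \<in> Q"
        by auto
      have "\<exists>A0. finite A0 \<and> A0 \<subseteq> A \<and> (\<forall>Q\<in>Xspec. x \<in> Q \<longrightarrow> (\<exists>a\<in>A0. a \<in> Q))"
        using x(2) I_def by simp
      then obtain A0 where A0: "finite A0" "A0 \<subseteq> A" "\<forall>Q\<in>Xspec. x \<in> Q \<longrightarrow> (\<exists>a\<in>A0. a \<in> Q)"
        by auto
      define C' where "C' = sigmaA ` A0 \<union> (\<lambda>b. Xspec - sigmaA b) ` B0"
      have "finite C'" unfolding C'_def using A0(1) B0(1) by simp
      moreover have "C' \<subseteq> C" unfolding C'_def using A0(2) B0(2) unfolding A_def Bs_def by auto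
      moreover have "\<Union>C' = Xspec"
      proof
        show "\<Union>C' \<subseteq> Xspec" unfolding C'_def sigmaA_def by blast
      next
        show "Xspec \<subseteq> \<Union>C'"
        proof
          fix Q :: "'a set" assume Q: "Q \<in> Xspec"
          show "Q \<in> \<Union>C'"
          proof (cases "B0 \<subseteq> Q")
            case True
            then have "x \<in> Q" using B0 Q by blast
            then obtain a where "a \<in> A0" "a \<in> Q" using A0 Q by blast
            then show ?thesis unfolding C'_def sigmaA_def using Q by blast
          next
            case False
            then obtain b where "b \<in> B0" "b \<notin> Q" by blast
            then show ?thesis unfolding C'_def sigmaA_def using Q by blast
          qed
        qed
      qed
      ultimately show False using nf ts by metis
    qed
    have "\<exists>Q. prime_filter Q \<and> F \<subseteq> Q \<and> Q \<inter> I = {} \<and> (\<forall>x\<in>Q. \<forall>y. x \<le> y \<longrightarrow> y \<in> Q)"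
    proof (rule prime_ext[where rel="(\<le>)"])
      show "\<And>x y. x \<in> F \<Longrightarrow> y \<in> F \<Longrightarrow> inf x y \<in> F"
      proof -
        fix x y assume "x \<in> F" "y \<in> F"
        then obtain B1 B2 where B: "finite B1" "B1 \<subseteq> Bs" "\<forall>Q\<in>Xspec. B1 \<subseteq> Q \<longrightarrow> x \<in> Q"
          "finite B2" "B2 \<subseteq> Bs" "\<forall>Q\<in>Xspec. B2 \<subseteq> Q \<longrightarrow> y \<in> Q" by (auto simp: F_def)
        have "\<forall>Q\<in>Xspec. B1 \<union> B2 \<subseteq> Q \<longrightarrow> inf x y \<in> Q" using B(3,6) by (auto simp: Xspec_iff pf_inf)
        then show "inf x y \<in> F" using B(1,2,4,5) unfolding F_def by (auto intro!: exI[of _ "B1 \<union> B2"])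
      qed
      show "\<And>x y. x \<in> F \<Longrightarrow> x \<le> y \<Longrightarrow> y \<in> F"
      proof -
        fix x y assume xy: "x \<in> F" "x \<le> y"
        then obtain B0 where B0: "finite B0" "B0 \<subseteq> Bs" "\<forall>Q\<in>Xspec. B0 \<subseteq> Q \<longrightarrow> x \<in> Q" by (auto simp: F_def)
        have "\<forall>Q\<in>Xspec. B0 \<subseteq> Q \<longrightarrow> y \<in> Q" using B0(3) xy(2) pf_up Xspec_iff by metis
        then show "y \<in> F" using B0(1,2) unfolding F_def by auto
      qed
      show "\<And>x y. x \<in> I \<Longrightarrow> y \<in> I \<Longrightarrow> sup x y \<in> I"
      proof -
        fix x y assume "x \<in> I" "y \<in> I"
        then obtain A1 A2 where A: "finite A1" "A1 \<subseteq> A" "\<forall>Q\<in>Xspec. x \<in> Q \<longrightarrow> (\<exists>a\<in>A1. a \<in> Q)"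
          "finite A2" "A2 \<subseteq> A" "\<forall>Q\<in>Xspec. y \<in> Q \<longrightarrow> (\<exists>a\<in>A2. a \<in> Q)" by (auto simp: I_def)
        have "\<forall>Q\<in>Xspec. sup x y \<in> Q \<longrightarrow> (\<exists>a\<in>A1 \<union> A2. a \<in> Q)" using A(3,6) by (auto simp: Xspec_iff pf_sup)
        then show "sup x y \<in> I" using A(1,2,4,5) unfolding I_def by (auto intro!: exI[of _ "A1 \<union> A2"])
      qed
      show "\<And>x y. y \<in> I \<Longrightarrow> x \<le> y \<Longrightarrow> x \<in> I"
      proof -
        fix x y assume xy: "y \<in> I" "x \<le> y"
        then obtain A0 where A0: "finite A0" "A0 \<subseteq> A" "\<forall>Q\<in>Xspec. y \<in> Q \<longrightarrow> (\<exists>a\<in>A0. a \<in> Q)" by (auto simp: I_def)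
        have "\<forall>Q\<in>Xspec. x \<in> Q \<longrightarrow> (\<exists>a\<in>A0. a \<in> Q)" using A0(3) xy(2) pf_up Xspec_iff by metis
        then show "x \<in> I" using A0(1,2) unfolding I_def by auto
      qed
      show "F \<inter> I = {}" by (rule FI)
      have "\<forall>Q\<in>Xspec. {} \<subseteq> Q \<longrightarrow> top \<in> Q" using pf_top Xspec_iff by blast
      then show "top \<in> F" unfolding F_def by (auto intro!: exI[of _ "{}"])
      have "\<forall>Q\<in>Xspec. bot \<in> Q \<longrightarrow> (\<exists>a\<in>{}. a \<in> Q)" using pf_bot Xspec_iff by blast
      then show "bot \<in> I" unfolding I_def by (auto intro!: exI[of _ "{}"])
      show "\<And>x y::'a. x \<le> y \<Longrightarrow> x \<le> y" by simp
      show "\<And>x y z::'a. x \<le> y \<Longrightarrow> y \<le> z \<Longrightarrow> x \<le> z" by (rule order_trans)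
      show "\<And>x y z::'a. x \<le> y \<Longrightarrow> x \<le> z \<Longrightarrow> x \<le> inf y z" by simp
      show "\<And>x y z::'a. x \<le> z \<Longrightarrow> y \<le> z \<Longrightarrow> sup x y \<le> z" by simp
    qed
    then obtain Q where Q: "prime_filter Q" "F \<subseteq> Q" "Q \<inter> I = {}" by auto
    have BsF: "Bs \<subseteq> F"
    proof
      fix b assume b: "b \<in> Bs"
      have "finite {b} \<and> {b} \<subseteq> Bs \<and> (\<forall>Q\<in>Xspec. {b} \<subseteq> Q \<longrightarrow> b \<in> Q)" using b by simp
      then show "b \<in> F" unfolding F_def by blast
    qed
    have AI: "A \<subseteq> I"
    proof
      fix b assume b: "b \<in> A"
      have "finite {b} \<and> {b} \<subseteq> A \<and> (\<forall>Q\<in>Xspec. b \<in> Q \<longrightarrow> (\<exists>a\<in>{b}. a \<in> Q))" using b by simp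
      then show "b \<in> I" unfolding I_def by blast
    qed
    have "Q \<in> Xspec" using Q(1) Xspec_iff by blast
    then have "Q \<in> \<Union>C" using C(2) ts by simp
    then obtain c where c: "c \<in> C" "Q \<in> c" by auto
    then have "c \<in> SB" using C(1) by auto
    then obtain a where "c = sigmaA a \<or> c = Xspec - sigmaA a" unfolding SB_def by auto
    then show False
    proof
      assume "c = sigmaA a"
      then have "a \<in> A" "a \<in> Q" using c unfolding A_def sigmaA_def by auto
      then show False using AI Q(3) by blast
    next
      assume "c = Xspec - sigmaA a"
      then have "a \<in> Bs" "a \<notin> Q" using c unfolding Bs_def sigmaA_def by auto
      then show False using BsF Q(2) by blast
    qed
  qed
qed


definition Cl :: "('a::{distrib_lattice,bounded_lattice} \<times> 'a) set \<Rightarrow> 'a set set" where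
  "Cl L = {P \<in> Xspec. \<forall>p\<in>L. fst p \<in> P \<longrightarrow> snd p \<in> P}"

lemma Cl_BA: "finite L \<Longrightarrow> Cl L \<in> BA"
proof (induction L rule: finite_induct)
  case empty
  have "Cl {} = topspace tauA" unfolding Cl_def topspace_tauA by simp
  then show ?case unfolding BA_def by (metis (mono_tags, lifting) mem_Collect_eq openin_topspace closedin_topspace)
next
  case (insert p L)
  define m where "m = fst p"
  define j where "j = snd p"
  have eq: "Cl (insert p L) = ((Xspec - sigmaA m) \<union> sigmaA j) \<inter> Cl L"
    unfolding Cl_def sigmaA_def m_def j_def by auto
  have eq2: "(Xspec - sigmaA m) \<union> sigmaA j = topspace tauA - Bx m j"
    unfolding topspace_tauA Bx_def sigmaA_def by auto
  have o: "openin tauA ((Xspec - sigmaA m) \<union> sigmaA j)"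
    by (rule openin_Un[OF open_csigma open_sigma])
  have c: "closedin tauA ((Xspec - sigmaA m) \<union> sigmaA j)"
    unfolding eq2 by (rule closedin_diff[OF closedin_topspace open_Bx])
  show ?case using insert.IH o c unfolding eq BA_def by (auto intro: openin_Int closedin_Int)
qed

lemma BA_Cl:
  assumes "U \<in> BA"
  shows "\<exists>L. finite L \<and> U = Cl L"
proof -
  have oU: "openin tauA U" and cU: "closedin tauA U" using assms unfolding BA_def by auto
  have UX: "U \<subseteq> Xspec" using openin_subset[OF oU] topspace_tauA by metis
  have oV: "openin tauA (Xspec - U)" using cU unfolding closedin_def topspace_tauA by blast
  have cV: "closedin tauA (Xspec - U)" using closedin_diff[OF closedin_topspace oU] topspace_tauA by metis
  have kV: "compactin tauA (Xspec - U)" by (rule closedin_compact_space[OF compact_tauA cV])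
  define PP where "PP = {p. Bx (fst p) (snd p) \<subseteq> Xspec - U}"
  define \<U> where "\<U> = (\<lambda>p. Bx (fst p) (snd p)) ` PP"
  have op: "\<forall>B\<in>\<U>. openin tauA B" unfolding \<U>_def using open_Bx by blast
  have cov: "Xspec - U \<subseteq> \<Union>\<U>"
  proof
    fix Q assume "Q \<in> Xspec - U"
    then obtain m j where "Q \<in> Bx m j" "Bx m j \<subseteq> Xspec - U" using open_basic[OF oV] by blast
    then show "Q \<in> \<Union>\<U>" unfolding \<U>_def PP_def by force
  qed
  have K: "\<And>\<V>. (\<forall>B\<in>\<V>. openin tauA B) \<Longrightarrow> Xspec - U \<subseteq> \<Union>\<V> \<Longrightarrow> \<exists>\<F>. finite \<F> \<and> \<F> \<subseteq> \<V> \<and> Xspec - U \<subseteq> \<Union>\<F>"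
    using kV unfolding compactin_def by blast
  obtain \<F> where F: "finite \<F>" "\<F> \<subseteq> \<U>" "Xspec - U \<subseteq> \<Union>\<F>"
    using K[OF op cov] by blast
  obtain L where L: "L \<subseteq> PP" "finite L" "\<F> = (\<lambda>p. Bx (fst p) (snd p)) ` L"
    using finite_subset_image[OF F(1) F(2)[unfolded \<U>_def]] by blast
  have "U = Cl L"
  proof
    show "U \<subseteq> Cl L"
    proof
      fix Q assume Q: "Q \<in> U"
      have "fst p \<in> Q \<longrightarrow> snd p \<in> Q" if "p \<in> L" for p
      proof -
        have "Bx (fst p) (snd p) \<subseteq> Xspec - U" using L(1) that unfolding PP_def by blast
        then show ?thesis using Q UX unfolding Bx_def by blast
      qed
      then show "Q \<in> Cl L" unfolding Cl_def using Q UX by blast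
    qed
  next
    show "Cl L \<subseteq> U"
    proof
      fix Q assume Q: "Q \<in> Cl L"
      show "Q \<in> U"
      proof (rule ccontr)
        assume "Q \<notin> U"
        then have "Q \<in> \<Union>\<F>" using F Q unfolding Cl_def by blast
        then obtain B where B: "B \<in> \<F>" "Q \<in> B" by blast
        then obtain p where p: "p \<in> L" "B = Bx (fst p) (snd p)" using L(3) by blast
        have "fst p \<in> Q \<longrightarrow> snd p \<in> Q" using Q p(1) unfolding Cl_def by simp
        moreover have "fst p \<in> Q" "snd p \<notin> Q" using B(2) p(2) unfolding Bx_def by simp_all
        ultimately show False by simp
      qed
    qed
  qed
  then show ?thesis using L(2) by blast
qed



context
  fixes imp coimp :: "'a::{distrib_lattice,bounded_lattice} \<Rightarrow> 'a \<Rightarrow> 'a"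
  assumes W: "WHB imp coimp"
begin

lemma ax1: "imp a a = top" using W unfolding WHB_def by simp
lemma ax2: "imp a (inf b c) = inf (imp a b) (imp a c)" using W unfolding WHB_def by simp
lemma ax3: "imp (sup a b) c = inf (imp a c) (imp b c)" using W unfolding WHB_def by blast
lemma ax4: "inf (imp a b) (imp b c) \<le> imp a c" using W unfolding WHB_def by blast
lemma ax5: "coimp a a = bot" using W unfolding WHB_def by blast
lemma ax6: "coimp (sup a b) c = sup (coimp a c) (coimp b c)" using W unfolding WHB_def by blast
lemma ax7: "coimp a (inf b c) = sup (coimp a b) (coimp a c)" using W unfolding WHB_def by blast
lemma ax8: "coimp a c \<le> sup (coimp a b) (coimp b c)" using W unfolding WHB_def by blast
lemma ax9: "inf a (coimp (imp a b) bot) \<le> b" using W unfolding WHB_def by blast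
lemma ax10: "a \<le> sup b (imp top (coimp a b))" using W unfolding WHB_def by blast

lemma imp_le: "x \<le> y \<Longrightarrow> imp x y = top"
proof -
  assume "x \<le> y"
  then have "inf x y = x" by (simp add: inf_absorb1)
  then have "imp x x = inf (imp x x) (imp x y)" using ax2[of x x y] by simp
  then show ?thesis using ax1[of x] by simp
qed

lemma coimp_le: "x \<le> y \<Longrightarrow> coimp x y = bot"
proof -
  assume "x \<le> y"
  then have "sup x y = y" by (simp add: sup_absorb2)
  then have "coimp y y = sup (coimp x y) (coimp y y)" using ax6[of x y y] by simp
  then show ?thesis using ax5[of y] by simp
qed

lemma GA_Cl: "GA imp (Cl L) = Cl ((\<lambda>p. (top, imp (fst p) (snd p))) ` L)"
proof (intro set_eqI iffI)
  fix P assume P: "P \<in> GA imp (Cl L)"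
  have PX: "P \<in> Xspec" and sub: "RA imp `` {P} \<subseteq> Cl L" using P unfolding GA_def by auto
  have pf: "prime_filter P" using PX Xspec_iff by blast
  have "imp (fst p) (snd p) \<in> P" if pL: "p \<in> L" for p
  proof (rule ccontr)
    assume nP: "imp (fst p) (snd p) \<notin> P"
    define m where "m = fst p"
    define j where "j = snd p"
    have trP: "\<And>x y z. imp x y \<in> P \<Longrightarrow> imp y z \<in> P \<Longrightarrow> imp x z \<in> P"
      using ax4 pf pf_inf pf_up by metis
    have "\<exists>Q. prime_filter Q \<and> {x. imp m x \<in> P} \<subseteq> Q \<and> Q \<inter> {x. imp x j \<in> P} = {}
      \<and> (\<forall>x\<in>Q. \<forall>y. imp x y \<in> P \<longrightarrow> y \<in> Q)"
    proof (rule prime_ext[where rel="\<lambda>x y. imp x y \<in> P"])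
      show "\<And>x y. x \<le> y \<Longrightarrow> imp x y \<in> P" using imp_le pf_top pf by metis
      show "\<And>x y z. imp x y \<in> P \<Longrightarrow> imp y z \<in> P \<Longrightarrow> imp x z \<in> P"
        using ax4 pf pf_inf pf_up by metis
      show "\<And>x y z. imp x y \<in> P \<Longrightarrow> imp x z \<in> P \<Longrightarrow> imp x (inf y z) \<in> P"
        using ax2 pf pf_inf by metis
      show "\<And>x y z. imp x z \<in> P \<Longrightarrow> imp y z \<in> P \<Longrightarrow> imp (sup x y) z \<in> P"
        using ax3 pf pf_inf by metis
      show "\<And>x y. x \<in> {x. imp m x \<in> P} \<Longrightarrow> y \<in> {x. imp m x \<in> P} \<Longrightarrow> inf x y \<in> {x. imp m x \<in> P}"
        using ax2 by (simp add: pf_inf[OF pf])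
      show "\<And>x y. x \<in> {x. imp m x \<in> P} \<Longrightarrow> imp x y \<in> P \<Longrightarrow> y \<in> {x. imp m x \<in> P}"
        using trP by blast
      show "\<And>x y. x \<in> {x. imp x j \<in> P} \<Longrightarrow> y \<in> {x. imp x j \<in> P} \<Longrightarrow> sup x y \<in> {x. imp x j \<in> P}"
        using ax3 by (simp add: pf_inf[OF pf])
      show "\<And>x y. y \<in> {x. imp x j \<in> P} \<Longrightarrow> imp x y \<in> P \<Longrightarrow> x \<in> {x. imp x j \<in> P}"
        using trP by blast
      show "{x. imp m x \<in> P} \<inter> {x. imp x j \<in> P} = {}"
      proof (rule ccontr)
        assume "{x. imp m x \<in> P} \<inter> {x. imp x j \<in> P} \<noteq> {}"
        then obtain x where "imp m x \<in> P" "imp x j \<in> P" by auto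
        then have "imp m j \<in> P" using ax4 pf pf_inf pf_up by metis
        then show False using nP m_def j_def by simp
      qed
      show "top \<in> {x. imp m x \<in> P}" using imp_le pf_top pf by simp
      show "bot \<in> {x. imp x j \<in> P}" using imp_le pf_top pf by simp
    qed
    then obtain Q where Q: "prime_filter Q" "{x. imp m x \<in> P} \<subseteq> Q" "Q \<inter> {x. imp x j \<in> P} = {}"
      "\<forall>x\<in>Q. \<forall>y. imp x y \<in> P \<longrightarrow> y \<in> Q" by auto
    have "(P, Q) \<in> RA imp" unfolding RA_def using PX Q(1,4) Xspec_iff by auto
    then have "Q \<in> Cl L" using sub by auto
    then have "m \<in> Q \<longrightarrow> j \<in> Q" using pL unfolding Cl_def m_def j_def by auto
    moreover have "m \<in> Q"
    proof -
      have "imp m m \<in> P" using ax1 pf_top[OF pf] by simp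
      then show ?thesis using Q(2) by blast
    qed
    moreover have "j \<notin> Q"
    proof -
      have "imp j j \<in> P" using ax1 pf_top[OF pf] by simp
      then show ?thesis using Q(3) by blast
    qed
    ultimately show False by simp
  qed
  then show "P \<in> Cl ((\<lambda>p. (top, imp (fst p) (snd p))) ` L)" unfolding Cl_def using PX by auto
next
  fix P assume P: "P \<in> Cl ((\<lambda>p. (top, imp (fst p) (snd p))) ` L)"
  then have PX: "P \<in> Xspec" and h: "\<And>p. p \<in> L \<Longrightarrow> imp (fst p) (snd p) \<in> P"
    unfolding Cl_def using pf_top Xspec_iff by auto
  have "RA imp `` {P} \<subseteq> Cl L"
  proof
    fix Q assume "Q \<in> RA imp `` {P}"
    then have Q: "Q \<in> Xspec" "\<And>a b. imp a b \<in> P \<Longrightarrow> a \<in> Q \<Longrightarrow> b \<in> Q" unfolding RA_def by auto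
    show "Q \<in> Cl L" unfolding Cl_def using Q h by auto
  qed
  then show "P \<in> GA imp (Cl L)" unfolding GA_def using PX by auto
qed

lemma HA_Cl: "HA coimp (Cl L) = Cl ((\<lambda>p. (coimp (fst p) (snd p), bot)) ` L)"
proof (intro set_eqI iffI)
  fix P assume P: "P \<in> HA coimp (Cl L)"
  have PX: "P \<in> Xspec" and sub: "SA coimp `` {P} \<subseteq> Cl L" using P unfolding HA_def by auto
  have pf: "prime_filter P" using PX Xspec_iff by blast
  have "coimp (fst p) (snd p) \<notin> P" if pL: "p \<in> L" for p
  proof
    assume nP: "coimp (fst p) (snd p) \<in> P"
    define m where "m = fst p"
    define j where "j = snd p"
    have trS: "\<And>x y z. coimp x y \<notin> P \<Longrightarrow> coimp y z \<notin> P \<Longrightarrow> coimp x z \<notin> P"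
      using ax8 pf pf_sup pf_up by metis
    have "\<exists>Q. prime_filter Q \<and> {x. coimp m x \<notin> P} \<subseteq> Q \<and> Q \<inter> {x. coimp x j \<notin> P} = {}
      \<and> (\<forall>x\<in>Q. \<forall>y. coimp x y \<notin> P \<longrightarrow> y \<in> Q)"
    proof (rule prime_ext[where rel="\<lambda>x y. coimp x y \<notin> P"])
      show "\<And>x y. x \<le> y \<Longrightarrow> coimp x y \<notin> P" using coimp_le pf_bot pf by metis
      show "\<And>x y z. coimp x y \<notin> P \<Longrightarrow> coimp y z \<notin> P \<Longrightarrow> coimp x z \<notin> P"
        using ax8 pf pf_sup pf_up by metis
      show "\<And>x y z. coimp x y \<notin> P \<Longrightarrow> coimp x z \<notin> P \<Longrightarrow> coimp x (inf y z) \<notin> P"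
        using ax7 pf pf_sup by metis
      show "\<And>x y z. coimp x z \<notin> P \<Longrightarrow> coimp y z \<notin> P \<Longrightarrow> coimp (sup x y) z \<notin> P"
        using ax6 pf pf_sup by metis
      show "\<And>x y. x \<in> {x. coimp m x \<notin> P} \<Longrightarrow> y \<in> {x. coimp m x \<notin> P} \<Longrightarrow> inf x y \<in> {x. coimp m x \<notin> P}"
        using ax7 by (simp add: pf_sup[OF pf])
      show "\<And>x y. x \<in> {x. coimp m x \<notin> P} \<Longrightarrow> coimp x y \<notin> P \<Longrightarrow> y \<in> {x. coimp m x \<notin> P}"
        using trS by blast
      show "\<And>x y. x \<in> {x. coimp x j \<notin> P} \<Longrightarrow> y \<in> {x. coimp x j \<notin> P} \<Longrightarrow> sup x y \<in> {x. coimp x j \<notin> P}"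
        using ax6 by (simp add: pf_sup[OF pf])
      show "\<And>x y. y \<in> {x. coimp x j \<notin> P} \<Longrightarrow> coimp x y \<notin> P \<Longrightarrow> x \<in> {x. coimp x j \<notin> P}"
        using trS by blast
      show "{x. coimp m x \<notin> P} \<inter> {x. coimp x j \<notin> P} = {}"
      proof (rule ccontr)
        assume "{x. coimp m x \<notin> P} \<inter> {x. coimp x j \<notin> P} \<noteq> {}"
        then obtain x where "coimp m x \<notin> P" "coimp x j \<notin> P" by auto
        then have "coimp m j \<notin> P" using ax8 pf pf_sup pf_up by metis
        then show False using nP m_def j_def by simp
      qed
      show "top \<in> {x. coimp m x \<notin> P}" using coimp_le pf_bot pf by simp
      show "bot \<in> {x. coimp x j \<notin> P}" using coimp_le pf_bot pf by simp
    qed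
    then obtain Q where Q: "prime_filter Q" "{x. coimp m x \<notin> P} \<subseteq> Q" "Q \<inter> {x. coimp x j \<notin> P} = {}"
      "\<forall>x\<in>Q. \<forall>y. coimp x y \<notin> P \<longrightarrow> y \<in> Q" by auto
    have "(P, Q) \<in> SA coimp" unfolding SA_def using PX Q(1,4) Xspec_iff by auto
    then have "Q \<in> Cl L" using sub by auto
    then have "m \<in> Q \<longrightarrow> j \<in> Q" using pL unfolding Cl_def m_def j_def by auto
    moreover have "m \<in> Q"
    proof -
      have "coimp m m \<notin> P" using ax5 pf_bot[OF pf] by simp
      then show ?thesis using Q(2) by blast
    qed
    moreover have "j \<notin> Q"
    proof -
      have "coimp j j \<notin> P" using ax5 pf_bot[OF pf] by simp
      then show ?thesis using Q(3) by blast
    qed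
    ultimately show False by simp
  qed
  then show "P \<in> Cl ((\<lambda>p. (coimp (fst p) (snd p), bot)) ` L)" unfolding Cl_def using PX by auto
next
  fix P assume P: "P \<in> Cl ((\<lambda>p. (coimp (fst p) (snd p), bot)) ` L)"
  then have PX: "P \<in> Xspec" and h: "\<And>p. p \<in> L \<Longrightarrow> coimp (fst p) (snd p) \<notin> P"
    unfolding Cl_def using pf_bot Xspec_iff by auto
  have "SA coimp `` {P} \<subseteq> Cl L"
  proof
    fix Q assume "Q \<in> SA coimp `` {P}"
    then have Q: "Q \<in> Xspec" "\<And>a b. a \<in> Q \<Longrightarrow> b \<notin> Q \<Longrightarrow> coimp a b \<in> P" unfolding SA_def by auto
    show "Q \<in> Cl L" unfolding Cl_def using Q h by auto
  qed
  then show "P \<in> HA coimp (Cl L)" unfolding HA_def using PX by auto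
qed

lemma SA_RA: "(P, Q) \<in> SA coimp \<longleftrightarrow> (Q, P) \<in> RA imp"
proof
  assume S: "(P, Q) \<in> SA coimp"
  then have PX: "P \<in> Xspec" "Q \<in> Xspec" and h: "\<And>a b. a \<in> Q \<Longrightarrow> b \<notin> Q \<Longrightarrow> coimp a b \<in> P"
    unfolding SA_def by auto
  have pP: "prime_filter P" and pQ: "prime_filter Q" using PX Xspec_iff by auto
  have "b \<in> P" if "imp a b \<in> Q" "a \<in> P" for a b
  proof -
    have "coimp (imp a b) bot \<in> P" using h[OF that(1)] pf_bot[OF pQ] by blast
    then have "inf a (coimp (imp a b) bot) \<in> P" using that(2) pf_inf[OF pP] by blast
    then show ?thesis using ax9 pf_up[OF pP] by blast
  qed
  then show "(Q, P) \<in> RA imp" unfolding RA_def using PX by auto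
next
  assume R: "(Q, P) \<in> RA imp"
  then have PX: "P \<in> Xspec" "Q \<in> Xspec" and h: "\<And>a b. imp a b \<in> Q \<Longrightarrow> a \<in> P \<Longrightarrow> b \<in> P"
    unfolding RA_def by auto
  have pP: "prime_filter P" and pQ: "prime_filter Q" using PX Xspec_iff by auto
  have "coimp a b \<in> P" if "a \<in> Q" "b \<notin> Q" for a b
  proof -
    have "sup b (imp top (coimp a b)) \<in> Q" using that(1) ax10 pf_up[OF pQ] by blast
    then have "imp top (coimp a b) \<in> Q" using that(2) pf_sup[OF pQ] by blast
    then show ?thesis using h pf_top[OF pP] by blast
  qed
  then show "(P, Q) \<in> SA coimp" unfolding SA_def using PX by auto
qed

lemma adj1:
  assumes "x \<subseteq> Xspec"
  shows "Xspec - HA coimp (Xspec - x) \<subseteq> y \<longleftrightarrow> x \<subseteq> GA imp y"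
proof
  assume L: "Xspec - HA coimp (Xspec - x) \<subseteq> y"
  show "x \<subseteq> GA imp y"
  proof
    fix Q assume Qx: "Q \<in> x"
    have "RA imp `` {Q} \<subseteq> y"
    proof
      fix P assume "P \<in> RA imp `` {Q}"
      then have R: "(Q, P) \<in> RA imp" by auto
      then have S: "(P, Q) \<in> SA coimp" using SA_RA by blast
      have PX: "P \<in> Xspec" using R unfolding RA_def by auto
      have "P \<notin> HA coimp (Xspec - x)" using S Qx unfolding HA_def by auto
      then show "P \<in> y" using L PX by auto
    qed
    then show "Q \<in> GA imp y" unfolding GA_def using Qx assms by auto
  qed
next
  assume Rr: "x \<subseteq> GA imp y"
  show "Xspec - HA coimp (Xspec - x) \<subseteq> y"
  proof
    fix P assume P: "P \<in> Xspec - HA coimp (Xspec - x)"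
    then obtain Q where S: "(P, Q) \<in> SA coimp" "Q \<notin> Xspec - x" unfolding HA_def by auto
    have "Q \<in> Xspec" using S(1) unfolding SA_def by auto
    then have "Q \<in> x" using S(2) by auto
    then have "RA imp `` {Q} \<subseteq> y" using Rr unfolding GA_def by auto
    moreover have "(Q, P) \<in> RA imp" using S(1) SA_RA by blast
    ultimately show "P \<in> y" by auto
  qed
qed

lemma adj2:
  assumes "x \<subseteq> Xspec"
  shows "Xspec - GA imp (Xspec - x) \<subseteq> y \<longleftrightarrow> x \<subseteq> HA coimp y"
proof
  assume L: "Xspec - GA imp (Xspec - x) \<subseteq> y"
  show "x \<subseteq> HA coimp y"
  proof
    fix Q assume Qx: "Q \<in> x"
    have "SA coimp `` {Q} \<subseteq> y"
    proof
      fix P assume "P \<in> SA coimp `` {Q}"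
      then have S: "(Q, P) \<in> SA coimp" by auto
      then have R: "(P, Q) \<in> RA imp" using SA_RA by blast
      have PX: "P \<in> Xspec" using S unfolding SA_def by auto
      have "P \<notin> GA imp (Xspec - x)" using R Qx unfolding GA_def by auto
      then show "P \<in> y" using L PX by auto
    qed
    then show "Q \<in> HA coimp y" unfolding HA_def using Qx assms by auto
  qed
next
  assume Rr: "x \<subseteq> HA coimp y"
  show "Xspec - GA imp (Xspec - x) \<subseteq> y"
  proof
    fix P assume P: "P \<in> Xspec - GA imp (Xspec - x)"
    then obtain Q where R: "(P, Q) \<in> RA imp" "Q \<notin> Xspec - x" unfolding GA_def by auto
    have "Q \<in> Xspec" using R(1) unfolding RA_def by auto
    then have "Q \<in> x" using R(2) by auto
    then have "SA coimp `` {Q} \<subseteq> y" using Rr unfolding HA_def by auto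
    moreover have "(Q, P) \<in> SA coimp" using R(1) SA_RA by blast
    ultimately show "P \<in> y" by auto
  qed
qed

end


theorem lemma6p1:
  fixes imp coimp :: "'a::{distrib_lattice,bounded_lattice} \<Rightarrow> 'a \<Rightarrow> 'a"
  assumes "WHB imp coimp"
  shows "tense_algebra_of_sets (Xspec :: 'a set set) BA (GA imp) (HA coimp)"
proof -
  have ts: "topspace (tauA :: 'a set topology) = Xspec" by (rule topspace_tauA)
  have sub: "BA \<subseteq> Pow (Xspec :: 'a set set)"
  proof
    fix U :: "'a set set" assume "U \<in> BA"
    then have "openin tauA U" unfolding BA_def by simp
    then have "U \<subseteq> topspace tauA" by (rule openin_subset)
    then show "U \<in> Pow Xspec" using ts by simp
  qed
  have e: "{} \<in> (BA :: 'a set set set)" unfolding BA_def by simp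
  have X: "(Xspec :: 'a set set) \<in> BA"
  proof -
    have "openin tauA (topspace (tauA :: 'a set topology))" "closedin tauA (topspace (tauA :: 'a set topology))"
      by (rule openin_topspace, rule closedin_topspace)
    then show ?thesis unfolding BA_def ts by simp
  qed
  have un: "\<forall>U\<in>(BA :: 'a set set set). \<forall>V\<in>BA. U \<union> V \<in> BA \<and> U \<inter> V \<in> BA"
    unfolding BA_def by (auto intro: openin_Un closedin_Un openin_Int closedin_Int)
  have cp: "\<forall>U\<in>(BA :: 'a set set set). Xspec - U \<in> BA"
  proof
    fix U :: "'a set set" assume "U \<in> BA"
    then have o: "openin tauA U" and c: "closedin tauA U" unfolding BA_def by auto
    have "openin tauA (topspace tauA - U)" using c unfolding closedin_def by simp
    moreover have "closedin tauA (topspace tauA - U)" by (rule closedin_diff[OF closedin_topspace o])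
    ultimately show "Xspec - U \<in> BA" unfolding BA_def ts by simp
  qed
  have GH: "\<forall>U\<in>(BA :: 'a set set set). GA imp U \<in> BA \<and> HA coimp U \<in> BA"
  proof
    fix U :: "'a set set" assume "U \<in> BA"
    then obtain L where L: "finite L" "U = Cl L" using BA_Cl by blast
    have "GA imp U = Cl ((\<lambda>p. (top, imp (fst p) (snd p))) ` L)" using GA_Cl[OF assms] L(2) by simp
    moreover have "HA coimp U = Cl ((\<lambda>p. (coimp (fst p) (snd p), bot)) ` L)" using HA_Cl[OF assms] L(2) by simp
    moreover have "Cl ((\<lambda>p. (top, imp (fst p) (snd p))) ` L) \<in> BA" by (rule Cl_BA) (simp add: L(1))
    moreover have "Cl ((\<lambda>p. (coimp (fst p) (snd p), bot)) ` L) \<in> BA" by (rule Cl_BA) (simp add: L(1))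
    ultimately show "GA imp U \<in> BA \<and> HA coimp U \<in> BA" by simp
  qed
  have A1: "\<forall>x\<in>(BA :: 'a set set set). \<forall>y\<in>BA. (Xspec - HA coimp (Xspec - x) \<subseteq> y \<longleftrightarrow> x \<subseteq> GA imp y)"
    using adj1[OF assms] sub by blast
  have A2: "\<forall>x\<in>(BA :: 'a set set set). \<forall>y\<in>BA. (Xspec - GA imp (Xspec - x) \<subseteq> y \<longleftrightarrow> x \<subseteq> HA coimp y)"
    using adj2[OF assms] sub by blast
  show ?thesis unfolding tense_algebra_of_sets_def using sub e X un cp GH A1 A2 by blast
qed


end
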